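(* Over directed graphs, there are first-order (FO) node classifiers expressible by ACR-GNNs which are not expressible in $\text{C}^2$. In particular, $\varphi_{\mathit{Lin}}(x)$ is such a classifier.
   Context: A directed graph is $G=(V,E,\lambda)$ with finite $V$, loop-free $E\subseteq V\times V$ and $\lambda:V\to\{0,1\}^d$, viewed as a first-order structure with unary predicates $P_1,\dots,P_d$ and binary predicate $E$. A node classifier is a formula with one free variable (or a function assigning a truth value to each node). $\text{C}^2$ is the two-variable fragment of first-order logic extended with counting quantifiers $\exists_k$. An ACR-GNN layer for directed graphs is a tuple $(\overleftarrow{\mathsf{agg}}, \overrightarrow{\mathsf{agg}}, \mathsf{comb}, \mathsf{read})$ updating labels by $\lambda'(v)=\mathsf{comb}\big(\lambda(v), \overleftarrow{\mathsf{agg}}(\{\!\{\lambda(w)\}\!\}_{w\in\overleftarrow{N}_G(v)}), \overrightarrow{\mathsf{agg}}(\{\!\{\lambda(w)\}\!\}_{w\in\overrightarrow{N}_G(v)}), \mathsf{read}(\{\!\{\lambda(w)\}\!\}_{w\in V})\big)$, where $\{\!\{\cdot\}\!\}$ denotes a multiset and $\overleftarrow{N}_G(v),\overrightarrow{N}_G(v)$ are in- and out-neighbourhoods; an ACR-GNN classifier is a fixed number of layers followed by a classification function. $\varphi_{\mathit{Lin}}(x)$ accepts a node of $G$ iff the edge relation of $G$ is a strict linear order. *)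

theory Defs
  imports Complex_Main "HOL-Library.Multiset"
begin

text \<open>Vertices are natural numbers (every finite graph is isomorphic to one of these).
  Labels are boolean lists; predicate P_i (0-based index i) holds at v iff the i-th bit of the label is set.\<close>

record graph =
  verts :: "nat set"
  edges :: "(nat \<times> nat) set"
  lab   :: "nat \<Rightarrow> bool list"

definition wf_graph :: "nat \<Rightarrow> graph \<Rightarrow> bool" where
  "wf_graph d G \<longleftrightarrow> finite (verts G) \<and> edges G \<subseteq> verts G \<times> verts G
     \<and> (\<forall>v. (v, v) \<notin> edges G) \<and> (\<forall>v\<in>verts G. length (lab G v) = d)"

type_synonym node_classifier = "graph \<Rightarrow> nat \<Rightarrow> bool"

text \<open>Variables are natural numbers. CEx k z \<phi> is the counting quantifier "there exist at least k z".
  Plain FO uses only k = 1 (ordinary existential quantifier); C2 uses only the variables 0 and 1.\<close>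

datatype cfo =
    CTrue
  | Pred nat nat
  | Edge nat nat
  | Eq nat nat
  | Neg cfo
  | Conj cfo cfo
  | CEx nat nat cfo

fun eval :: "graph \<Rightarrow> (nat \<Rightarrow> nat) \<Rightarrow> cfo \<Rightarrow> bool" where
  "eval G \<alpha> CTrue = True"
| "eval G \<alpha> (Pred i z) = (i < length (lab G (\<alpha> z)) \<and> lab G (\<alpha> z) ! i)"
| "eval G \<alpha> (Edge z z') = ((\<alpha> z, \<alpha> z') \<in> edges G)"
| "eval G \<alpha> (Eq z z') = (\<alpha> z = \<alpha> z')"
| "eval G \<alpha> (Neg \<phi>) = (\<not> eval G \<alpha> \<phi>)"
| "eval G \<alpha> (Conj \<phi> \<psi>) = (eval G \<alpha> \<phi> \<and> eval G \<alpha> \<psi>)"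
| "eval G \<alpha> (CEx k z \<phi>) = (k \<le> card {u \<in> verts G. eval G (\<alpha>(z := u)) \<phi>})"

fun free_vars :: "cfo \<Rightarrow> nat set" where
  "free_vars CTrue = {}"
| "free_vars (Pred i z) = {z}"
| "free_vars (Edge z z') = {z, z'}"
| "free_vars (Eq z z') = {z, z'}"
| "free_vars (Neg \<phi>) = free_vars \<phi>"
| "free_vars (Conj \<phi> \<psi>) = free_vars \<phi> \<union> free_vars \<psi>"
| "free_vars (CEx k z \<phi>) = free_vars \<phi> - {z}"

fun all_vars :: "cfo \<Rightarrow> nat set" where
  "all_vars CTrue = {}"
| "all_vars (Pred i z) = {z}"
| "all_vars (Edge z z') = {z, z'}"
| "all_vars (Eq z z') = {z, z'}"
| "all_vars (Neg \<phi>) = all_vars \<phi>"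
| "all_vars (Conj \<phi> \<psi>) = all_vars \<phi> \<union> all_vars \<psi>"
| "all_vars (CEx k z \<phi>) = insert z (all_vars \<phi>)"

fun is_FO :: "cfo \<Rightarrow> bool" where
  "is_FO (Neg \<phi>) = is_FO \<phi>"
| "is_FO (Conj \<phi> \<psi>) = (is_FO \<phi> \<and> is_FO \<psi>)"
| "is_FO (CEx k z \<phi>) = (k = 1 \<and> is_FO \<phi>)"
| "is_FO _ = True"

text \<open>C2: only the two variables 0 (= x) and 1 (= y), arbitrary counting quantifiers.\<close>
definition is_C2 :: "cfo \<Rightarrow> bool" where
  "is_C2 \<phi> \<longleftrightarrow> all_vars \<phi> \<subseteq> {0, 1}"

definition expresses :: "nat \<Rightarrow> cfo \<Rightarrow> node_classifier \<Rightarrow> bool" where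
  "expresses d \<phi> cls \<longleftrightarrow> free_vars \<phi> \<subseteq> {0} \<and>
     (\<forall>G. wf_graph d G \<longrightarrow> (\<forall>v\<in>verts G. \<forall>\<alpha>. \<alpha> 0 = v \<longrightarrow> (eval G \<alpha> \<phi> \<longleftrightarrow> cls G v)))"

definition FO_expressible :: "nat \<Rightarrow> node_classifier \<Rightarrow> bool" where
  "FO_expressible d cls \<longleftrightarrow> (\<exists>\<phi>. is_FO \<phi> \<and> expresses d \<phi> cls)"

definition C2_expressible :: "nat \<Rightarrow> node_classifier \<Rightarrow> bool" where
  "C2_expressible d cls \<longleftrightarrow> (\<exists>\<phi>. is_C2 \<phi> \<and> expresses d \<phi> cls)"

record layer =
  agg_in  :: "real list multiset \<Rightarrow> real list"
  agg_out :: "real list multiset \<Rightarrow> real list"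
  comb    :: "real list \<Rightarrow> real list \<Rightarrow> real list \<Rightarrow> real list \<Rightarrow> real list"
  readout :: "real list multiset \<Rightarrow> real list"

definition fixed_dims :: "layer \<Rightarrow> bool" where
  "fixed_dims L \<longleftrightarrow> (\<exists>a. \<forall>M. length (agg_in L M) = a) \<and> (\<exists>a. \<forall>M. length (agg_out L M) = a)
     \<and> (\<exists>a. \<forall>M. length (readout L M) = a) \<and> (\<exists>a. \<forall>x y z w. length (comb L x y z w) = a)"

definition in_nbrs :: "graph \<Rightarrow> nat \<Rightarrow> nat set" where
  "in_nbrs G v = {w \<in> verts G. (w, v) \<in> edges G}"

definition out_nbrs :: "graph \<Rightarrow> nat \<Rightarrow> nat set" where
  "out_nbrs G v = {w \<in> verts G. (v, w) \<in> edges G}"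

definition layer_step :: "graph \<Rightarrow> layer \<Rightarrow> (nat \<Rightarrow> real list) \<Rightarrow> (nat \<Rightarrow> real list)" where
  "layer_step G L f = (\<lambda>v. comb L (f v)
      (agg_in L (image_mset f (mset_set (in_nbrs G v))))
      (agg_out L (image_mset f (mset_set (out_nbrs G v))))
      (readout L (image_mset f (mset_set (verts G)))))"

fun run_layers :: "graph \<Rightarrow> layer list \<Rightarrow> (nat \<Rightarrow> real list) \<Rightarrow> (nat \<Rightarrow> real list)" where
  "run_layers G [] f = f"
| "run_layers G (L # Ls) f = run_layers G Ls (layer_step G L f)"

definition init_features :: "graph \<Rightarrow> nat \<Rightarrow> real list" where
  "init_features G v = map (\<lambda>b. if b then 1 else 0) (lab G v)"

definition ACR_expressible :: "nat \<Rightarrow> node_classifier \<Rightarrow> bool" where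
  "ACR_expressible d cls \<longleftrightarrow> (\<exists>(Ls :: layer list) (c :: real list \<Rightarrow> bool).
     (\<forall>L\<in>set Ls. fixed_dims L) \<and>
     (\<forall>G. wf_graph d G \<longrightarrow> (\<forall>v\<in>verts G. c (run_layers G Ls (init_features G) v) = cls G v)))"

definition phi_Lin :: node_classifier where
  "phi_Lin G v \<longleftrightarrow> strict_linear_order_on (verts G) (edges G)"

end

theory Submission
  imports Defs
begin


lemma eval_ex1:
  assumes "finite (verts G)"
  shows "eval G \<alpha> (CEx 1 z \<psi>) \<longleftrightarrow> (\<exists>u\<in>verts G. eval G (\<alpha>(z := u)) \<psi>)"
  using assms by (auto simp: Suc_le_eq card_gt_0_iff)

definition All1 :: "nat \<Rightarrow> cfo \<Rightarrow> cfo" where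
  "All1 z \<psi> = Neg (CEx 1 z (Neg \<psi>))"

lemma eval_all1:
  assumes "finite (verts G)"
  shows "eval G \<alpha> (All1 z \<psi>) \<longleftrightarrow> (\<forall>u\<in>verts G. eval G (\<alpha>(z := u)) \<psi>)"
  using eval_ex1[OF assms, of \<alpha> z "Neg \<psi>"] by (simp add: All1_def)

definition phi_trans :: cfo where
  "phi_trans = All1 1 (All1 2 (All1 3 (Neg (Conj (Conj (Edge 1 2) (Edge 2 3)) (Neg (Edge 1 3))))))"

definition phi_tot :: cfo where
  "phi_tot = All1 1 (All1 2 (Neg (Conj (Neg (Eq 1 2)) (Conj (Neg (Edge 1 2)) (Neg (Edge 2 1))))))"

definition phi_FO :: cfo where
  "phi_FO = Conj phi_trans phi_tot"

lemma FO_part: "FO_expressible d phi_Lin"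
  unfolding FO_expressible_def
proof (intro exI conjI)
  show "is_FO phi_FO" by (simp add: phi_FO_def phi_trans_def phi_tot_def All1_def)
  show "expresses d phi_FO phi_Lin"
    unfolding expresses_def
  proof (intro conjI allI impI ballI)
    show "free_vars phi_FO \<subseteq> {0}" by (auto simp: phi_FO_def phi_trans_def phi_tot_def All1_def)
    fix G v and \<alpha> :: "nat \<Rightarrow> nat"
    assume wf: "wf_graph d G" and "v \<in> verts G" "\<alpha> 0 = v"
    have fin: "finite (verts G)" and sub: "edges G \<subseteq> verts G \<times> verts G"
      and irr: "\<forall>v. (v, v) \<notin> edges G" using wf by (auto simp: wf_graph_def)
    have t: "eval G \<alpha> phi_trans \<longleftrightarrow> trans (edges G)"
      using sub by (auto simp: phi_trans_def eval_all1[OF fin] trans_def)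
    have to: "eval G \<alpha> phi_tot \<longleftrightarrow> total_on (verts G) (edges G)"
      by (auto simp: phi_tot_def eval_all1[OF fin] total_on_def)
    show "eval G \<alpha> phi_FO \<longleftrightarrow> phi_Lin G v"
      using t to irr by (auto simp: phi_FO_def phi_Lin_def strict_linear_order_on_def irrefl_def)
  qed
qed



definition deg :: "graph \<Rightarrow> nat \<Rightarrow> nat" where
  "deg G v = card (out_nbrs G v)"

lemma lin_char:
  assumes wf: "wf_graph d G"
  shows "((\<forall>w\<in>verts G. \<forall>u\<in>out_nbrs G w. deg G u < deg G w) \<and> inj_on (deg G) (verts G))
         \<longleftrightarrow> strict_linear_order_on (verts G) (edges G)"
proof -
  have fin: "finite (verts G)" and sub: "edges G \<subseteq> verts G \<times> verts G"
    and irr: "\<forall>v. (v, v) \<notin> edges G" using wf by (auto simp: wf_graph_def)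
  have finout: "finite (out_nbrs G w)" for w using fin by (simp add: out_nbrs_def)
  show ?thesis
  proof
    assume A: "(\<forall>w\<in>verts G. \<forall>u\<in>out_nbrs G w. deg G u < deg G w) \<and> inj_on (deg G) (verts G)"
    hence dec: "\<And>w u. w \<in> verts G \<Longrightarrow> u \<in> out_nbrs G w \<Longrightarrow> deg G u < deg G w"
      and inj: "inj_on (deg G) (verts G)" by auto
    have img: "deg G ` out_nbrs G w = {..< deg G w}" if w: "w \<in> verts G" for w
    proof (rule card_subset_eq)
      show "finite {..<deg G w}" by simp
      show "deg G ` out_nbrs G w \<subseteq> {..<deg G w}" using dec[OF w] by auto
      have "inj_on (deg G) (out_nbrs G w)"
        using inj by (rule inj_on_subset) (auto simp: out_nbrs_def)
      then show "card (deg G ` out_nbrs G w) = card {..<deg G w}"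
        by (metis card_image card_lessThan deg_def)
    qed
    have key: "(x, z) \<in> edges G" if x: "x \<in> verts G" and z: "z \<in> verts G"
      and lt: "deg G z < deg G x" for x z
    proof -
      have "deg G z \<in> deg G ` out_nbrs G x" using img[OF x] lt by auto
      then obtain z' where z': "z' \<in> out_nbrs G x" "deg G z' = deg G z" by auto
      have "z' \<in> verts G" using z' by (auto simp: out_nbrs_def)
      hence "z' = z" using inj z z' by (auto dest: inj_onD)
      thus ?thesis using z' by (auto simp: out_nbrs_def)
    qed
    have degE: "deg G u < deg G w" if "(w, u) \<in> edges G" for w u
      using dec[of w u] that sub by (auto simp: out_nbrs_def)
    show "strict_linear_order_on (verts G) (edges G)"
      unfolding strict_linear_order_on_def
    proof (intro conjI)
      show "trans (edges G)"
      proof (rule transI)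
        fix x y z assume "(x, y) \<in> edges G" "(y, z) \<in> edges G"
        moreover have "x \<in> verts G" "z \<in> verts G" using calculation sub by auto
        ultimately show "(x, z) \<in> edges G" using key degE by (meson less_trans)
      qed
      show "irrefl (edges G)" using irr by (simp add: irrefl_def)
      show "total_on (verts G) (edges G)"
        unfolding total_on_def
      proof (intro ballI impI)
        fix x y assume "x \<in> verts G" "y \<in> verts G" "x \<noteq> y"
        moreover hence "deg G x \<noteq> deg G y" using inj by (auto dest: inj_onD)
        ultimately show "(x, y) \<in> edges G \<or> (y, x) \<in> edges G"
          using key by (metis linorder_neqE_nat)
      qed
    qed
  next
    assume L: "strict_linear_order_on (verts G) (edges G)"
    hence tr: "trans (edges G)" and tot: "total_on (verts G) (edges G)"
      by (auto simp: strict_linear_order_on_def)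
    have dec: "deg G u < deg G w" if "(w, u) \<in> edges G" for w u
    proof -
      have "out_nbrs G u \<subset> out_nbrs G w"
      proof
        show "out_nbrs G u \<subseteq> out_nbrs G w"
          using tr that by (auto simp: out_nbrs_def dest: transD)
        have "u \<in> out_nbrs G w" "u \<notin> out_nbrs G u" using that sub irr by (auto simp: out_nbrs_def)
        thus "out_nbrs G u \<noteq> out_nbrs G w" by auto
      qed
      thus ?thesis unfolding deg_def by (simp add: psubset_card_mono finout)
    qed
    show "(\<forall>w\<in>verts G. \<forall>u\<in>out_nbrs G w. deg G u < deg G w) \<and> inj_on (deg G) (verts G)"
    proof
      show "\<forall>w\<in>verts G. \<forall>u\<in>out_nbrs G w. deg G u < deg G w"
        using dec by (auto simp: out_nbrs_def)
      show "inj_on (deg G) (verts G)"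
      proof (rule inj_onI, rule ccontr)
        fix x y assume "x \<in> verts G" "y \<in> verts G" "deg G x = deg G y" "x \<noteq> y"
        thus False using tot dec unfolding total_on_def by (metis less_irrefl)
      qed
    qed
  qed
qed

definition L1 :: layer where
  "L1 = \<lparr>agg_in = (\<lambda>M. []), agg_out = (\<lambda>M. [real (size M)]),
         comb = (\<lambda>x a b r. [hd b]), readout = (\<lambda>M. [])\<rparr>"

definition L2 :: layer where
  "L2 = \<lparr>agg_in = (\<lambda>M. []), agg_out = (\<lambda>M. [Max (insert (-1) (hd ` set_mset M))]),
         comb = (\<lambda>x a b r. [if hd b < hd x \<and> hd r = 1 then 1 else 0]),
         readout = (\<lambda>M. [if size M = card (set_mset M) then 1 else 0])\<rparr>"

definition L3 :: layer where
  "L3 = \<lparr>agg_in = (\<lambda>M. []), agg_out = (\<lambda>M. []),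
         comb = (\<lambda>x a b r. [hd r]),
         readout = (\<lambda>M. [if (\<forall>y\<in>#M. hd y = 1) then 1 else 0])\<rparr>"

lemma ACR_part: "ACR_expressible d phi_Lin"
  unfolding ACR_expressible_def
proof (rule exI[of _ "[L1, L2, L3]"], rule exI[of _ "\<lambda>x. hd x = (1::real)"], intro conjI allI impI ballI)
  show "fixed_dims L" if "L \<in> set [L1, L2, L3]" for L
    using that by (auto simp: fixed_dims_def L1_def L2_def L3_def)
  fix G v assume wf: "wf_graph d G" and v: "v \<in> verts G"
  have fin: "finite (verts G)" using wf by (auto simp: wf_graph_def)
  have finout: "finite (out_nbrs G w)" for w using fin by (simp add: out_nbrs_def)
  define f1 where "f1 = layer_step G L1 (init_features G)"
  have f1: "f1 w = [real (deg G w)]" for w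
    by (simp add: f1_def layer_step_def L1_def deg_def)
  define f2 where "f2 = layer_step G L2 f1"
  have injeq: "inj_on f1 (verts G) \<longleftrightarrow> inj_on (deg G) (verts G)"
    by (auto simp: inj_on_def f1)
  have f2: "f2 w = [if (\<forall>u\<in>out_nbrs G w. deg G u < deg G w) \<and> inj_on (deg G) (verts G) then 1 else 0]" for w
  proof -
    have m: "Max (insert (-1) (hd ` f1 ` out_nbrs G w)) < real (deg G w) \<longleftrightarrow>
             (\<forall>u\<in>out_nbrs G w. deg G u < deg G w)"
      by (subst Max_less_iff) (auto simp: finout f1)
    have r: "(card (verts G) = card (f1 ` verts G)) \<longleftrightarrow> inj_on (deg G) (verts G)"
      using inj_on_iff_eq_card[OF fin, of f1] injeq by auto
    show ?thesis
      unfolding f2_def layer_step_def L2_def using m r by (simp add: finout fin f1)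
  qed
  define f3 where "f3 = layer_step G L3 f2"
  have f3: "f3 w = [if (\<forall>w\<in>verts G. \<forall>u\<in>out_nbrs G w. deg G u < deg G w) \<and> inj_on (deg G) (verts G) then 1 else 0]" for w
    unfolding f3_def layer_step_def L3_def using fin by (auto simp: f2)
  have "run_layers G [L1, L2, L3] (init_features G) = f3"
    by (simp add: f1_def f2_def f3_def)
  thus "(\<lambda>x. hd x = (1::real)) (run_layers G [L1, L2, L3] (init_features G) v) = phi_Lin G v"
    using lin_char[OF wf] by (simp add: f3 phi_Lin_def)
qed



lemma mono_dir:
  fixes cl :: "nat \<Rightarrow> 'c" and cl' :: "nat \<Rightarrow> 'c"
  assumes fin: "finite V" "finite V'"
    and cnt: "\<And>c. min K (card {u\<in>V. cl u = c}) = min K (card {u\<in>V'. cl' u = c})"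
    and kK: "k \<le> K" and k: "k \<le> card {u\<in>V. cl u \<in> R}"
  shows "k \<le> card {u\<in>V'. cl' u \<in> R}"
proof (cases "\<exists>c\<in>R. K \<le> card {u\<in>V. cl u = c}")
  case True
  then obtain c where c: "c \<in> R" "K \<le> card {u\<in>V. cl u = c}" by auto
  hence "K \<le> card {u\<in>V'. cl' u = c}" using cnt[of c] by (auto simp: min_def split: if_splits)
  also have "\<dots> \<le> card {u\<in>V'. cl' u \<in> R}" using c fin by (intro card_mono) auto
  finally show ?thesis using kK by simp
next
  case False
  hence eq: "card {u\<in>V. cl u = c} = card {u\<in>V'. cl' u = c}" if "c \<in> R" for c
    using cnt[of c] that by (auto simp: min_def split: if_splits)
  define I where "I = (cl ` V \<union> cl' ` V') \<inter> R"
  have finI: "finite I" using fin by (simp add: I_def)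
  have dec: "card {u\<in>W. cl'' u \<in> R} = (\<Sum>c\<in>I. card {u\<in>W. cl'' u = c})"
    if W: "finite W" and sub: "cl'' ` W \<subseteq> cl ` V \<union> cl' ` V'" for W and cl'' :: "nat \<Rightarrow> 'c"
  proof -
    have "{u\<in>W. cl'' u \<in> R} = (\<Union>c\<in>I. {u\<in>W. cl'' u = c})"
      using sub by (auto simp: I_def)
    moreover have "card (\<Union>c\<in>I. {u\<in>W. cl'' u = c}) = (\<Sum>c\<in>I. card {u\<in>W. cl'' u = c})"
      using finI W by (intro card_UN_disjoint) auto
    ultimately show ?thesis by simp
  qed
  have "card {u\<in>V. cl u \<in> R} = (\<Sum>c\<in>I. card {u\<in>V. cl u = c})"
    using dec[OF fin(1), of cl] by auto
  also have "\<dots> = (\<Sum>c\<in>I. card {u\<in>V'. cl' u = c})"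
    using eq by (intro sum.cong) (auto simp: I_def)
  also have "\<dots> = card {u\<in>V'. cl' u \<in> R}"
    using dec[OF fin(2), of cl'] by auto
  finally show ?thesis using k by simp
qed

lemma count_transfer:
  fixes cl :: "nat \<Rightarrow> 'c" and cl' :: "nat \<Rightarrow> 'c"
  assumes fin: "finite V" "finite V'"
    and cnt: "\<And>c. min K (card {u\<in>V. cl u = c}) = min K (card {u\<in>V'. cl' u = c})"
    and K: "1 \<le> K" and kK: "k \<le> K"
    and PQ: "\<And>u u'. u \<in> V \<Longrightarrow> u' \<in> V' \<Longrightarrow> cl u = cl' u' \<Longrightarrow> P u = Q u'"
    and PP: "\<And>u u'. u \<in> V \<Longrightarrow> u' \<in> V \<Longrightarrow> cl u = cl u' \<Longrightarrow> P u = P u'"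
  shows "k \<le> card {u\<in>V. P u} \<longleftrightarrow> k \<le> card {u\<in>V'. Q u}"
proof -
  define R where "R = {c. \<exists>u\<in>V. cl u = c \<and> P u}"
  have A: "{u\<in>V. P u} = {u\<in>V. cl u \<in> R}" unfolding R_def using PP by blast
  have B: "{u\<in>V'. Q u} = {u\<in>V'. cl' u \<in> R}"
  proof (intro set_eqI iffI)
    fix u' assume u': "u' \<in> {u\<in>V'. Q u}"
    have "1 \<le> card {u\<in>V'. cl' u = cl' u'}"
    proof -
      have "finite {u\<in>V'. cl' u = cl' u'}" using fin by simp
      moreover have "u' \<in> {u\<in>V'. cl' u = cl' u'}" using u' by simp
      ultimately show ?thesis by (metis One_nat_def Suc_leI card_gt_0_iff empty_iff)
    qed
    hence "1 \<le> min K (card {u\<in>V. cl u = cl' u'})" using cnt[of "cl' u'"] K by simp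
    hence "card {u\<in>V. cl u = cl' u'} \<noteq> 0" by auto
    then obtain u where "u \<in> V" "cl u = cl' u'" by (metis (mono_tags, lifting) card.empty empty_Collect_eq)
    thus "u' \<in> {u\<in>V'. cl' u \<in> R}" unfolding R_def using PQ u' by blast
  next
    fix u' assume "u' \<in> {u\<in>V'. cl' u \<in> R}"
    thus "u' \<in> {u\<in>V'. Q u}" unfolding R_def using PQ by blast
  qed
  show ?thesis unfolding A B
    using mono_dir[OF fin cnt kK] mono_dir[OF fin(2,1) cnt[symmetric] kK] by blast
qed



definition flipE :: "nat \<Rightarrow> nat \<Rightarrow> bool \<Rightarrow> nat \<Rightarrow> nat \<Rightarrow> bool" where
  "flipE a c f i j = (if (i = a \<and> j = c) \<or> (i = c \<and> j = a) then (i < j) \<noteq> f else i < j)"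

definition tau :: "nat \<Rightarrow> nat \<Rightarrow> nat \<Rightarrow> nat \<times> nat" where
  "tau N m i = (min i m, min (N - 1 - i) m)"

definition rl :: "nat \<Rightarrow> nat \<Rightarrow> bool \<Rightarrow> nat \<Rightarrow> nat \<Rightarrow> bool \<times> bool \<times> bool" where
  "rl a c f u b = (u = b, flipE a c f u b, flipE a c f b u)"

definition SS :: "nat \<Rightarrow> nat \<Rightarrow> nat \<Rightarrow> nat \<Rightarrow> bool \<Rightarrow> nat \<Rightarrow> nat \<times> nat \<Rightarrow> bool \<times> bool \<times> bool \<Rightarrow> nat set" where
  "SS N m a c f b t \<rho> = {u \<in> {..<N}. tau N m u = t \<and> rl a c f u b = \<rho>}"

lemma flip_irr: "a \<noteq> c \<Longrightarrow> \<not> flipE a c f x x"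
  by (auto simp: flipE_def)

lemma flip_asym: "a \<noteq> c \<Longrightarrow> u \<noteq> b \<Longrightarrow> flipE a c f u b \<longleftrightarrow> \<not> flipE a c f b u"
  by (auto simp: flipE_def)

lemma flipF[simp]: "flipE a c False i j = (i < j)"
  by (auto simp: flipE_def)

lemma flip_ns: "\<not> ((u = a \<and> b = c) \<or> (u = c \<and> b = a)) \<Longrightarrow> flipE a c f u b = (u < b)"
  by (auto simp: flipE_def)

lemma rl_F: "rl a c False u b = (u = b, u < b, b < u)"
  by (simp add: rl_def)

lemma rl_cases: "a \<noteq> c \<Longrightarrow> rl a c f u b \<in> {(True, False, False), (False, True, False), (False, False, True)}"
  using flip_asym[of a c u b f] flip_irr[of a c f u]
  by (cases "u = b") (auto simp: rl_def)

lemma finSS: "finite (SS N m a c f b t \<rho>)"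
  by (simp add: SS_def)

lemma LB_in:
  assumes "b \<le> N - m"
  shows "b - m \<le> card (SS N m a c False b (m, m) (False, True, False))"
proof -
  have "{m..<b} \<subseteq> SS N m a c False b (m, m) (False, True, False)"
    using assms by (auto simp: SS_def tau_def rl_F min_def)
  from card_mono[OF finSS this] show ?thesis by simp
qed

lemma LB_out:
  assumes "m \<le> b"
  shows "N - m - b - 1 \<le> card (SS N m a c False b (m, m) (False, False, True))"
proof -
  have "{b+1..<N-m} \<subseteq> SS N m a c False b (m, m) (False, False, True)"
    using assms by (auto simp: SS_def tau_def rl_F min_def)
  from card_mono[OF finSS this] show ?thesis by simp
qed

lemma stepA:
  assumes ac: "a < c" and a: "m + K + 1 \<le> a" and N: "c + m + K + 2 \<le> N" and b: "b < N"
  shows "min K (card (SS N m a c f b t \<rho>)) = min K (card (SS N m a c False b t \<rho>))"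
proof (cases "b = a \<or> b = c")
  case False
  have "rl a c f u b = rl a c False u b" for u
    using False by (auto simp: rl_def flip_ns)
  hence "SS N m a c f b t \<rho> = SS N m a c False b t \<rho>" by (simp add: SS_def)
  thus ?thesis by simp
next
  case True
  define o' where "o' = (if b = a then c else a)"
  have o'ne: "o' \<noteq> b" using True ac by (auto simp: o'_def)
  have other: "rl a c f u b = rl a c False u b" if "u \<noteq> o'" for u
    using True that ac by (auto simp: rl_def flip_ns o'_def)
  let ?Sf = "SS N m a c f b t \<rho>" and ?SF = "SS N m a c False b t \<rho>"
  have diff: "?Sf - {o'} = ?SF - {o'}"
    using other by (auto simp: SS_def)
  show ?thesis
  proof (cases "(o' \<in> ?Sf) = (o' \<in> ?SF)")
    case True
    hence "?Sf = ?SF" using diff by blast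
    thus ?thesis by simp
  next
    case False
    hence o'in: "o' \<in> ?Sf \<or> o' \<in> ?SF" by blast
    have o'range: "m \<le> o'" "o' + m + 1 \<le> N" "o' < N" using ac a N by (auto simp: o'_def)
    have t: "t = (m, m)" using o'in o'range by (auto simp: SS_def tau_def min_def)
    have "\<rho> = rl a c f o' b \<or> \<rho> = rl a c False o' b" using o'in by (auto simp: SS_def)
    hence \<rho>: "\<rho> = (False, True, False) \<or> \<rho> = (False, False, True)"
      using rl_cases[of a c f o' b] rl_cases[of a c False o' b] ac o'ne
      by (auto simp: rl_def)
    have brange: "m + K + 1 \<le> b" "b + m + K + 2 \<le> N" using True ac a N by auto
    have big: "K + 1 \<le> card ?SF"
      using \<rho>
    proof
      assume r: "\<rho> = (False, True, False)"
      have "b - m \<le> card ?SF" using LB_in[of b N m a c] brange unfolding t r by simp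
      thus ?thesis using brange by linarith
    next
      assume r: "\<rho> = (False, False, True)"
      have "N - m - b - 1 \<le> card ?SF" using LB_out[of m b N a c] brange unfolding t r by simp
      thus ?thesis using brange by linarith
    qed
    have "card ?SF - 1 \<le> card (?SF - {o'})" by (simp add: card_Diff_singleton_if)
    also have "\<dots> \<le> card ?Sf" using diff by (intro card_mono[OF finSS]) auto
    finally have "K \<le> card ?Sf" using big by linarith
    thus ?thesis using big by (simp add: min_def)
  qed
qed

lemma stepB:
  assumes mm: "m + K \<le> m'" and N: "2 * m' < N" and b: "b < N" and b': "b' < N"
    and tt: "tau N m' b = tau N m' b'"
  shows "min K (card (SS N m a c False b t \<rho>)) = min K (card (SS N m a c False b' t \<rho>))"
proof (cases "b = b'")
  case True thus ?thesis by simp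
next
  case False
  have mid: "m' \<le> x \<and> x + m' + 1 \<le> N" if "x = b \<or> x = b'" for x
  proof (rule ccontr)
    assume "\<not> (m' \<le> x \<and> x + m' + 1 \<le> N)"
    thus False using tt False b b' that by (auto simp: tau_def min_def split: if_splits)
  qed
  have midb: "m' \<le> b" "b + m' + 1 \<le> N" and midb': "m' \<le> b'" "b' + m' + 1 \<le> N"
    using mid by auto
  show ?thesis
  proof (cases "t = (m, m)")
    case False
    have "SS N m a c False b t \<rho> = SS N m a c False b' t \<rho>"
    proof -
      have "rl a c False u b = rl a c False u b'" if "tau N m u = t" "u < N" for u
      proof -
        have "u < m \<or> N - 1 - u < m" using that False by (auto simp: tau_def min_def split: if_splits)
        thus ?thesis using midb midb' mm by (auto simp: rl_F)
      qed
      thus ?thesis by (auto simp: SS_def)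
    qed
    thus ?thesis by simp
  next
    case True
    have gen: "min K (card (SS N m a c False x t \<rho>)) =
       (if \<rho> = (False, True, False) \<or> \<rho> = (False, False, True) then K
        else if \<rho> = (True, False, False) then min K 1 else 0)"
      if x: "m' \<le> x" "x + m' + 1 \<le> N" for x
    proof -
      consider "\<rho> = (False, True, False)" | "\<rho> = (False, False, True)" | "\<rho> = (True, False, False)"
        | "\<rho> \<notin> {(True, False, False), (False, True, False), (False, False, True)}" by blast
      thus ?thesis
      proof cases
        case 1
        have "x - m \<le> card (SS N m a c False x t \<rho>)" using LB_in[of x N m a c] x mm unfolding True 1 by simp
        thus ?thesis using 1 x mm by (simp add: min_def)
      next
        case 2
        have "N - m - x - 1 \<le> card (SS N m a c False x t \<rho>)" using LB_out[of m x N a c] x mm unfolding True 2 by simp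
        thus ?thesis using 2 x mm by (simp add: min_def)
      next
        case 3
        have "SS N m a c False x t \<rho> = {x}" using x mm unfolding True 3
          by (auto simp: SS_def rl_F tau_def min_def)
        thus ?thesis using 3 by simp
      next
        case 4
        have "SS N m a c False x t \<rho> = {}" using 4 rl_cases[of a c False] by (auto simp: SS_def rl_F)
        thus ?thesis using 4 by auto
      qed
    qed
    show ?thesis using gen[OF midb] gen[OF midb'] by simp
  qed
qed

lemma count_main:
  assumes ac: "a < c" and a: "m' + K + 1 \<le> a" and N: "c + m' + K + 2 \<le> N"
    and mm: "m + K \<le> m'" and b: "b < N" and b': "b' < N"
    and tt: "tau N m' b = tau N m' b'"
  shows "min K (card (SS N m a c f b t \<rho>)) = min K (card (SS N m a c g b' t \<rho>))"
proof -
  have "min K (card (SS N m a c f b t \<rho>)) = min K (card (SS N m a c False b t \<rho>))"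
    using ac a N mm b by (intro stepA) auto
  also have "\<dots> = min K (card (SS N m a c False b' t \<rho>))"
    using ac a N mm b b' tt by (intro stepB[where m'=m']) auto
  also have "\<dots> = min K (card (SS N m a c g b' t \<rho>))"
    using ac a N mm b' by (intro stepA[symmetric]) auto
  finally show ?thesis .
qed



definition Ef :: "nat \<Rightarrow> nat \<Rightarrow> nat \<Rightarrow> bool \<Rightarrow> (nat \<times> nat) set" where
  "Ef N a c f = {(i, j). i < N \<and> j < N \<and> flipE a c f i j}"

definition Gr :: "nat \<Rightarrow> nat \<Rightarrow> nat \<Rightarrow> bool \<Rightarrow> nat \<Rightarrow> graph" where
  "Gr N a c f d = \<lparr>verts = {..<N}, edges = Ef N a c f, lab = (\<lambda>_. replicate d False)\<rparr>"

lemma Gr_simps[simp]: "verts (Gr N a c f d) = {..<N}" "edges (Gr N a c f d) = Ef N a c f"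
  "lab (Gr N a c f d) = (\<lambda>_. replicate d False)"
  by (simp_all add: Gr_def)

definition Tp :: "nat \<Rightarrow> nat \<Rightarrow> nat \<Rightarrow> nat \<Rightarrow> bool \<Rightarrow> (nat \<Rightarrow> nat) \<Rightarrow> _" where
  "Tp N m a c f \<alpha> = (tau N m (\<alpha> 0), tau N m (\<alpha> 1), rl a c f (\<alpha> 0) (\<alpha> 1))"

fun qd :: "cfo \<Rightarrow> nat" where
  "qd (Neg \<phi>) = qd \<phi>"
| "qd (Conj \<phi> \<psi>) = max (qd \<phi>) (qd \<psi>)"
| "qd (CEx k z \<phi>) = Suc (qd \<phi>)"
| "qd _ = 0"

fun mk :: "cfo \<Rightarrow> nat" where
  "mk (Neg \<phi>) = mk \<phi>"
| "mk (Conj \<phi> \<psi>) = max (mk \<phi>) (mk \<psi>)"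
| "mk (CEx k z \<phi>) = max k (mk \<phi>)"
| "mk _ = 0"

lemma tau_down: "m \<le> m' \<Longrightarrow> tau N m' x = tau N m' y \<Longrightarrow> tau N m x = tau N m y"
  by (auto simp: tau_def min_def split: if_splits)

definition sw :: "bool \<times> bool \<times> bool \<Rightarrow> bool \<times> bool \<times> bool" where
  "sw = (\<lambda>(x, y, z). (x, z, y))"

lemma rl_sw: "(rl a c f b u = \<rho>) = (rl a c f u b = sw \<rho>)"
  by (cases \<rho>) (auto simp: rl_def sw_def)

lemma inv:
  assumes K: "1 \<le> K" and a: "Q * K + K + 1 \<le> a" and ac: "a < c" and N: "c + Q * K + K + 2 \<le> N"
  shows "all_vars \<phi> \<subseteq> {0, 1} \<Longrightarrow> mk \<phi> \<le> K \<Longrightarrow> qd \<phi> \<le> r \<Longrightarrow> r \<le> Q \<Longrightarrow>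
    \<alpha> 0 < N \<Longrightarrow> \<alpha> 1 < N \<Longrightarrow> \<beta> 0 < N \<Longrightarrow> \<beta> 1 < N \<Longrightarrow>
    Tp N (r * K) a c f \<alpha> = Tp N (r * K) a c g \<beta> \<Longrightarrow>
    eval (Gr N a c f d) \<alpha> \<phi> = eval (Gr N a c g d) \<beta> \<phi>"
proof (induction \<phi> arbitrary: r \<alpha> \<beta> f g)
  case CTrue
  then show ?case by simp
next
  case (Pred i z)
  then show ?case by simp
next
  case (Edge z z')
  have z: "z = 0 \<or> z = 1" "z' = 0 \<or> z' = 1" using Edge.prems(1) by auto
  have "rl a c f (\<alpha> 0) (\<alpha> 1) = rl a c g (\<beta> 0) (\<beta> 1)" using Edge.prems(9) by (simp add: Tp_def)
  hence e: "flipE a c f (\<alpha> 0) (\<alpha> 1) = flipE a c g (\<beta> 0) (\<beta> 1)"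
       "flipE a c f (\<alpha> 1) (\<alpha> 0) = flipE a c g (\<beta> 1) (\<beta> 0)" by (auto simp: rl_def)
  have irr: "\<not> flipE a c h x x" for h x using ac flip_irr[of a c h x] by simp
  show ?case using z e irr Edge.prems(5-8) by (auto simp: Ef_def)
next
  case (Eq z z')
  have z: "z = 0 \<or> z = 1" "z' = 0 \<or> z' = 1" using Eq.prems(1) by auto
  have "rl a c f (\<alpha> 0) (\<alpha> 1) = rl a c g (\<beta> 0) (\<beta> 1)" using Eq.prems(9) by (simp add: Tp_def)
  hence e: "(\<alpha> 0 = \<alpha> 1) = (\<beta> 0 = \<beta> 1)" by (auto simp: rl_def)
  show ?case using z e by auto
next
  case (Neg \<phi>)
  have "eval (Gr N a c f d) \<alpha> \<phi> = eval (Gr N a c g d) \<beta> \<phi>"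
    using Neg.prems by (intro Neg.IH[of r]) auto
  then show ?case by simp
next
  case (Conj \<phi>1 \<phi>2)
  have "eval (Gr N a c f d) \<alpha> \<phi>1 = eval (Gr N a c g d) \<beta> \<phi>1"
    using Conj.prems by (intro Conj.IH(1)[of r]) auto
  moreover have "eval (Gr N a c f d) \<alpha> \<phi>2 = eval (Gr N a c g d) \<beta> \<phi>2"
    using Conj.prems by (intro Conj.IH(2)[of r]) auto
  ultimately show ?case by simp
next
  case (CEx k z \<psi>)
  obtain r' where r: "r = Suc r'" using CEx.prems(3) by (cases r) auto
  define m where "m = r' * K"
  have mr: "r * K = m + K" by (simp add: r m_def)
  have r'Q: "r' \<le> Q" and qdp: "qd \<psi> \<le> r'" using CEx.prems(3,4) r by auto
  have avp: "all_vars \<psi> \<subseteq> {0, 1}" and mkp: "mk \<psi> \<le> K" and kK: "k \<le> K" and z: "z = 0 \<or> z = 1"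
    using CEx.prems(1,2) by auto
  have T: "tau N (r*K) (\<alpha> 0) = tau N (r*K) (\<beta> 0)" "tau N (r*K) (\<alpha> 1) = tau N (r*K) (\<beta> 1)"
    "rl a c f (\<alpha> 0) (\<alpha> 1) = rl a c g (\<beta> 0) (\<beta> 1)" using CEx.prems(9) by (auto simp: Tp_def)
  have T': "tau N m (\<alpha> 0) = tau N m (\<beta> 0)" "tau N m (\<alpha> 1) = tau N m (\<beta> 1)"
    using T(1,2) mr by (auto intro: tau_down[of m "r*K"])
  have rKQ: "r * K \<le> Q * K" using CEx.prems(4) by simp
  have cm: "min K (card (SS N m a c f b t \<rho>)) = min K (card (SS N m a c g b' t \<rho>))"
    if "b < N" "b' < N" "tau N (r*K) b = tau N (r*K) b'" for b b' t \<rho>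
    using that ac a N rKQ mr by (intro count_main[where m'="r*K"]) auto
  have IH: "eval (Gr N a c f' d) \<alpha>' \<psi> = eval (Gr N a c g' d) \<beta>' \<psi>"
    if "\<alpha>' 0 < N" "\<alpha>' 1 < N" "\<beta>' 0 < N" "\<beta>' 1 < N"
       "Tp N m a c f' \<alpha>' = Tp N m a c g' \<beta>'" for \<alpha>' \<beta>' f' g'
    using CEx.IH[OF avp mkp qdp r'Q that(1-4)] that(5) by (simp add: m_def)
  from z show ?case
  proof
    assume z0: "z = 0"
    let ?cl = "\<lambda>u. (tau N m u, rl a c f u (\<alpha> 1))"
    let ?cl' = "\<lambda>u. (tau N m u, rl a c g u (\<beta> 1))"
    have "k \<le> card {u\<in>{..<N}. eval (Gr N a c f d) (\<alpha>(0 := u)) \<psi>} \<longleftrightarrow>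
          k \<le> card {u\<in>{..<N}. eval (Gr N a c g d) (\<beta>(0 := u)) \<psi>}"
    proof (rule count_transfer[where cl = ?cl and cl' = ?cl' and K = K])
      show "min K (card {u \<in> {..<N}. ?cl u = cc}) = min K (card {u \<in> {..<N}. ?cl' u = cc})" for cc
      proof -
        obtain t \<rho> where Pair: "cc = (t, \<rho>)" by (cases cc)
        have "{u \<in> {..<N}. ?cl u = cc} = SS N m a c f (\<alpha> 1) t \<rho>"
             "{u \<in> {..<N}. ?cl' u = cc} = SS N m a c g (\<beta> 1) t \<rho>"
          by (auto simp: SS_def Pair)
        thus ?thesis using cm[of "\<alpha> 1" "\<beta> 1" t \<rho>] CEx.prems(6,8) T(2) by simp
      qed
      show "eval (Gr N a c f d) (\<alpha>(0 := u)) \<psi> = eval (Gr N a c g d) (\<beta>(0 := u')) \<psi>"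
        if "u \<in> {..<N}" "u' \<in> {..<N}" "?cl u = ?cl' u'" for u u'
        using that CEx.prems(5-8) T' by (intro IH) (auto simp: Tp_def)
      show "eval (Gr N a c f d) (\<alpha>(0 := u)) \<psi> = eval (Gr N a c f d) (\<alpha>(0 := u')) \<psi>"
        if "u \<in> {..<N}" "u' \<in> {..<N}" "?cl u = ?cl u'" for u u'
        using that CEx.prems(5-8) by (intro IH) (auto simp: Tp_def)
    qed (use K kK in auto)
    thus ?case using z0 by simp
  next
    assume z1: "z = 1"
    let ?cl = "\<lambda>u. (tau N m u, rl a c f (\<alpha> 0) u)"
    let ?cl' = "\<lambda>u. (tau N m u, rl a c g (\<beta> 0) u)"
    have "k \<le> card {u\<in>{..<N}. eval (Gr N a c f d) (\<alpha>(1 := u)) \<psi>} \<longleftrightarrow>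
          k \<le> card {u\<in>{..<N}. eval (Gr N a c g d) (\<beta>(1 := u)) \<psi>}"
    proof (rule count_transfer[where cl = ?cl and cl' = ?cl' and K = K])
      show "min K (card {u \<in> {..<N}. ?cl u = cc}) = min K (card {u \<in> {..<N}. ?cl' u = cc})" for cc
      proof -
        obtain t \<rho> where Pair: "cc = (t, \<rho>)" by (cases cc)
        have "{u \<in> {..<N}. ?cl u = cc} = SS N m a c f (\<alpha> 0) t (sw \<rho>)"
             "{u \<in> {..<N}. ?cl' u = cc} = SS N m a c g (\<beta> 0) t (sw \<rho>)"
          by (auto simp: SS_def Pair rl_sw[of a c f "\<alpha> 0"] rl_sw[of a c g "\<beta> 0"])
        thus ?thesis using cm[of "\<alpha> 0" "\<beta> 0" t "sw \<rho>"] CEx.prems(5,7) T(1) by simp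
      qed
      show "eval (Gr N a c f d) (\<alpha>(1 := u)) \<psi> = eval (Gr N a c g d) (\<beta>(1 := u')) \<psi>"
        if "u \<in> {..<N}" "u' \<in> {..<N}" "?cl u = ?cl' u'" for u u'
        using that CEx.prems(5-8) T' by (intro IH) (auto simp: Tp_def)
      show "eval (Gr N a c f d) (\<alpha>(1 := u)) \<psi> = eval (Gr N a c f d) (\<alpha>(1 := u')) \<psi>"
        if "u \<in> {..<N}" "u' \<in> {..<N}" "?cl u = ?cl u'" for u u'
        using that CEx.prems(5-8) by (intro IH) (auto simp: Tp_def)
    qed (use K kK in auto)
    thus ?case using z1 by simp
  qed
qed

lemma C2_part: "\<not> C2_expressible d phi_Lin"
proof
  assume "C2_expressible d phi_Lin"
  then obtain \<phi> where c2: "is_C2 \<phi>" and ex: "expresses d \<phi> phi_Lin"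
    by (auto simp: C2_expressible_def)
  define K where "K = mk \<phi> + 1"
  define Q where "Q = qd \<phi>"
  define a where "a = Q * K + K + 1"
  define c where "c = a + 2"
  define N where "N = c + Q * K + K + 2"
  have ac: "a < c" by (simp add: c_def)
  have wf: "wf_graph d (Gr N a c f d)" for f
    using ac flip_irr[of a c f] by (auto simp: wf_graph_def Ef_def)
  define \<alpha> where "\<alpha> = (\<lambda>_::nat. 0::nat)"
  have N0: "0 < N" by (simp add: N_def)
  have e1: "eval (Gr N a c False d) \<alpha> \<phi> = phi_Lin (Gr N a c False d) 0"
    using ex wf N0 by (auto simp: expresses_def \<alpha>_def)
  have e2: "eval (Gr N a c True d) \<alpha> \<phi> = phi_Lin (Gr N a c True d) 0"
    using ex wf N0 by (auto simp: expresses_def \<alpha>_def)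
  have l1: "phi_Lin (Gr N a c False d) 0"
    by (auto simp: phi_Lin_def strict_linear_order_on_def trans_def irrefl_def total_on_def Ef_def)
  have l2: "\<not> phi_Lin (Gr N a c True d) 0"
  proof
    assume "phi_Lin (Gr N a c True d) 0"
    hence tr: "trans (Ef N a c True)" by (simp add: phi_Lin_def strict_linear_order_on_def)
    have "(c, a) \<in> Ef N a c True" "(a, a + 1) \<in> Ef N a c True" "(c, a + 1) \<notin> Ef N a c True"
      by (auto simp: Ef_def flipE_def N_def c_def)
    thus False using tr by (meson transD)
  qed
  have "eval (Gr N a c False d) \<alpha> \<phi> = eval (Gr N a c True d) \<alpha> \<phi>"
  proof (rule inv[where K = K and Q = Q and r = Q])
    show "Tp N (Q * K) a c False \<alpha> = Tp N (Q * K) a c True \<alpha>"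
      using flip_irr[of a c True 0] ac by (simp add: Tp_def rl_def \<alpha>_def)
  qed (use c2 N0 in \<open>auto simp: K_def Q_def a_def c_def N_def is_C2_def \<alpha>_def\<close>)
  thus False using e1 e2 l1 l2 by simp
qed


theorem corollary1:
  fixes d :: nat
  shows "FO_expressible d phi_Lin \<and> ACR_expressible d phi_Lin \<and> \<not> C2_expressible d phi_Lin"
  using FO_part ACR_part C2_part by blast

end
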